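(* Under the three-receiver coding module below, at the beginning of any slot $t>0$, at least one of the two receivers not labeled $L$ has an empty unsolved set, i.e., satisfies $H_i=D_i$.
   Context: A sender broadcasts packets $\mathbf{p}_1,\mathbf{p}_2,\dots$ (indexed by arrival order, vectors over $\mathbb{F}_3$) to three receivers $1,2,3$ over a slotted erasure broadcast channel; each slot it transmits at most one linear combination of arrived packets, each receiver either receives it or suffers an erasure, and perfect feedback gives the sender every receiver's knowledge. The rank of a receiver is the dimension of the space of linear combinations it knows. Receiver $i$ has heard of a packet if it knows some linear combination involving that packet (with nonzero coefficient); $H_i$ is the set of packets it has heard of and $D_i$ the set it has decoded; $H_i\setminus D_i$ is its unsolved set. "Oldest" means smallest index. Coding module: labels $L,N,D$ form a permutation of $\{1,2,3\}$; initially $L=1,N=2,D=3,m=0$. Each slot: let $U=\{\mathbf{p}_1,\dots,\mathbf{p}_m\}$ together with $\mathbf{p}_{m+1}$ if it has arrived, and set $S_1=D_N\cap D_D$, $S_2=D_N\cap(H_D\setminus D_D)$, $S_3=D_N\setminus H_D$, $S_4=D_D\setminus D_N$, $S_5=(H_D\setminus D_D)\setminus D_N$, $S_6=U\setminus(H_D\cup D_N)$. Transmit: Case 1 ($\mathbf{p}_{m+1}$ not arrived): if $S_2,S_4$ both nonempty send the sum of their oldest packets; else if $S_3,S_4$ both nonempty send the sum of their oldest packets; else send the oldest packet of the first nonempty set among $S_5,S_6,S_2,S_3,S_4$; if all are empty send nothing. Case 2 ($\mathbf{p}_{m+1}\in S_1$): send $\mathbf{p}_{m+1}$ plus whatever Case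 1 would send. Case 3 ($\mathbf{p}_{m+1}\in S_2$): send $\mathbf{p}_{m+1}+c\mathbf{p}$ with $\mathbf{p}$ the oldest packet of the first nonempty set among $S_4,S_5,S_6$, where $c=1$ unless $\mathbf{p}\in S_5$, in which case $c\in\{1,2\}$ is chosen so that the combination is innovative to receiver $D$. Case 4 ($\mathbf{p}_{m+1}\in S_3$): send $\mathbf{p}_{m+1}+\mathbf{p}$, $\mathbf{p}$ the oldest packet of the first nonempty set among $S_4,S_5,S_6$. Case 5 ($\mathbf{p}_{m+1}\in S_4$): send $\mathbf{p}_{m+1}+\mathbf{p}$, $\mathbf{p}$ the oldest packet of the first nonempty set among $S_2,S_3,S_6$. (In Cases 3–5, if all listed sets are empty, $\mathbf{p}_{m+1}$ is sent alone.) Case 6 (otherwise): send $\mathbf{p}_{m+1}$. After feedback, update $H_i,D_i$, set $m$ to the maximum rank of the three receivers; among receivers that have decoded all of $\mathbf{p}_1,\dots,\mathbf{p}_m$, label the one with lowest index $L$ (if there is none, assign labels arbitrarily); of the other two receivers, if exactly one has nonempty unsolved set, label it $D$ and the other $N$; otherwise assign $D,N$ arbitrarily. *)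

theory Defs
  imports Main "HOL-Library.Numeral_Type"
begin

text \<open>Coefficients are in F_3, realised as the numeral type 3 (integers mod 3).
  A linear combination of packets is a coefficient vector indexed by packet
  numbers 1,2,3,... (index 0 is unused).  Receivers are the numbers 1,2,3.\<close>

type_synonym vec = "nat \<Rightarrow> 3"

definition zerov :: vec where "zerov = (\<lambda>_. 0)"
definition unitv :: "nat \<Rightarrow> vec" where "unitv j = (\<lambda>k. if k = j then 1 else 0)"
definition vadd :: "vec \<Rightarrow> vec \<Rightarrow> vec" where "vadd v w = (\<lambda>k. v k + w k)"
definition smul :: "3 \<Rightarrow> vec \<Rightarrow> vec" where "smul c v = (\<lambda>k. c * v k)"

inductive_set lspan :: "vec set \<Rightarrow> vec set" for S where
  zero: "zerov \<in> lspan S"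
| add: "v \<in> S \<Longrightarrow> w \<in> lspan S \<Longrightarrow> vadd (smul c v) w \<in> lspan S"

definition lin_indep :: "vec set \<Rightarrow> bool" where
  "lin_indep B \<longleftrightarrow> finite B \<and>
     (\<forall>c :: vec \<Rightarrow> 3. (\<forall>k. (\<Sum>b\<in>B. c b * b k) = 0) \<longrightarrow> (\<forall>b\<in>B. c b = 0))"

definition rank :: "vec set \<Rightarrow> nat" where
  "rank K = Max {card B | B. B \<subseteq> K \<and> lin_indep B}"

definition heard :: "vec set \<Rightarrow> nat set" where
  "heard K = {j. \<exists>v\<in>K. v j \<noteq> 0}"

definition decoded :: "vec set \<Rightarrow> nat set" where
  "decoded K = {j. unitv j \<in> K}"

definition unsolved :: "vec set \<Rightarrow> nat set" where
  "unsolved K = heard K - decoded K"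

record state =
  know :: "nat \<Rightarrow> vec set"
  lL :: nat
  lN :: nat
  lD :: nat
  mm :: nat

definition init_state :: state where
  "init_state = \<lparr>know = (\<lambda>_. lspan {}), lL = 1, lN = 2, lD = 3, mm = 0\<rparr>"

fun first_nonempty :: "nat set list \<Rightarrow> nat set option" where
  "first_nonempty [] = None"
| "first_nonempty (A # As) = (if A \<noteq> {} then Some A else first_nonempty As)"

text \<open>The sets S_1..S_6 (arr = whether p_(m+1) has arrived).\<close>
definition Sets :: "state \<Rightarrow> bool \<Rightarrow> nat set list" where
  "Sets s arr =
    (let m = mm s;
         DN = decoded (know s (lN s));
         DD = decoded (know s (lD s));
         HD = heard (know s (lD s));
         U = {1..m} \<union> (if arr then {m+1} else {})
     in [DN \<inter> DD, DN \<inter> (HD - DD), DN - HD, DD - DN, (HD - DD) - DN, U - (HD \<union> DN)])"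

definition case1 :: "nat set list \<Rightarrow> vec option" where
  "case1 S =
    (let S2 = S!1; S3 = S!2; S4 = S!3; S5 = S!4; S6 = S!5 in
     if S2 \<noteq> {} \<and> S4 \<noteq> {} then Some (vadd (unitv (Min S2)) (unitv (Min S4)))
     else if S3 \<noteq> {} \<and> S4 \<noteq> {} then Some (vadd (unitv (Min S3)) (unitv (Min S4)))
     else (case first_nonempty [S5, S6, S2, S3, S4] of
             None \<Rightarrow> None
           | Some A \<Rightarrow> Some (unitv (Min A))))"

text \<open>All transmissions allowed by the coding module (the choice of c in Case 3
  is the only nondeterminism).\<close>
definition transmissions :: "state \<Rightarrow> bool \<Rightarrow> vec option set" where
  "transmissions s arr =
    (let S = Sets s arr; S1 = S!0; S2 = S!1; S3 = S!2; S4 = S!3; S5 = S!4; S6 = S!5;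
         q = mm s + 1; eq = unitv q; KD = know s (lD s)
     in if \<not> arr then {case1 S}
        else if q \<in> S1 then
          {Some (case case1 S of None \<Rightarrow> eq | Some w \<Rightarrow> vadd eq w)}
        else if q \<in> S2 then
          (case first_nonempty [S4, S5, S6] of
             None \<Rightarrow> {Some eq}
           | Some A \<Rightarrow>
               {Some (vadd eq (smul c (unitv (Min A)))) | c.
                  if Min A \<in> S5
                  then (c = 1 \<or> c = 2) \<and> vadd eq (smul c (unitv (Min A))) \<notin> KD
                  else c = 1})
        else if q \<in> S3 then
          (case first_nonempty [S4, S5, S6] of
             None \<Rightarrow> {Some eq}
           | Some A \<Rightarrow> {Some (vadd eq (unitv (Min A)))})
        else if q \<in> S4 then
          (case first_nonempty [S2, S3, S6] of
             None \<Rightarrow> {Some eq}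
           | Some A \<Rightarrow> {Some (vadd eq (unitv (Min A)))})
        else {Some eq})"

definition labels_ok :: "(nat \<Rightarrow> vec set) \<Rightarrow> nat \<Rightarrow> nat \<Rightarrow> nat \<Rightarrow> nat \<Rightarrow> bool" where
  "labels_ok K m l n d \<longleftrightarrow>
     {l, n, d} = {1, 2, 3} \<and>
     (let C = {i \<in> {1, 2, 3}. {1..m} \<subseteq> decoded (K i)} in C \<noteq> {} \<longrightarrow> l = Min C) \<and>
     \<not> (unsolved (K n) \<noteq> {} \<and> unsolved (K d) = {})"

text \<open>One slot: arrived = number of packets arrived by this slot,
  rcv i = receiver i receives (no erasure) in this slot.\<close>
definition step :: "nat \<Rightarrow> (nat \<Rightarrow> bool) \<Rightarrow> state \<Rightarrow> state \<Rightarrow> bool" where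
  "step arrived rcv s s' \<longleftrightarrow>
     (\<exists>v \<in> transmissions s (mm s + 1 \<le> arrived).
        know s' = (\<lambda>i. case v of None \<Rightarrow> know s i
                                | Some w \<Rightarrow> if rcv i then lspan (insert w (know s i)) else know s i) \<and>
        mm s' = Max ((\<lambda>i. rank (know s' i)) ` {1, 2, 3}) \<and>
        labels_ok (know s') (mm s') (lL s') (lN s') (lD s'))"

end

theory Submission
  imports Defs "HOL-Library.FuncSet"
begin

lemma three_cases: "(x::3) = 0 \<or> x = 1 \<or> x = 2"
proof (cases x)
  case (of_int z)
  then have "z = 0 \<or> z = 1 \<or> z = 2" by auto
  then show ?thesis using of_int by auto
qed

lemma sq1: "(x::3) \<noteq> 0 \<Longrightarrow> x * x = 1"
  using three_cases[of x] by auto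

definition supp :: "vec \<Rightarrow> nat set" where "supp v = {k. v k \<noteq> 0}"

definition subspace :: "vec set \<Rightarrow> bool" where
  "subspace K \<longleftrightarrow> zerov \<in> K \<and> (\<forall>v\<in>K. \<forall>w\<in>K. vadd v w \<in> K) \<and> (\<forall>c. \<forall>v\<in>K. smul c v \<in> K)"

lemma vadd_zero[simp]: "vadd zerov w = w" by (simp add: vadd_def zerov_def)

lemma lspan_add: "v \<in> lspan S \<Longrightarrow> w \<in> lspan S \<Longrightarrow> vadd v w \<in> lspan S"
proof (induction v rule: lspan.induct)
  case zero then show ?case by simp
next
  case (add x u c)
  have "vadd (vadd (smul c x) u) w = vadd (smul c x) (vadd u w)"
    by (simp add: vadd_def add.assoc)
  then show ?case using add by (auto intro: lspan.add)
qed

lemma lspan_smul: "v \<in> lspan S \<Longrightarrow> smul c v \<in> lspan S"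
proof (induction v rule: lspan.induct)
  case zero
  have "smul c zerov = zerov" by (simp add: smul_def zerov_def)
  then show ?case by (simp add: lspan.zero)
next
  case (add x u d)
  have "smul c (vadd (smul d x) u) = vadd (smul (c*d) x) (smul c u)"
    by (simp add: vadd_def smul_def algebra_simps)
  then show ?case using add by (auto intro: lspan.add)
qed

lemma lspan_subspace: "subspace (lspan S)"
  unfolding subspace_def by (auto intro: lspan.zero lspan_add lspan_smul)

lemma lspan_sup: "S \<subseteq> lspan S"
proof
  fix v assume "v \<in> S"
  have "vadd (smul 1 v) zerov = v" by (simp add: vadd_def smul_def zerov_def)
  then show "v \<in> lspan S" using lspan.add[OF \<open>v \<in> S\<close> lspan.zero, of 1] by simp
qed

lemma lspan_least: "subspace T \<Longrightarrow> S \<subseteq> T \<Longrightarrow> lspan S \<subseteq> T"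
proof
  fix v assume T: "subspace T" "S \<subseteq> T" and "v \<in> lspan S"
  from this(3) show "v \<in> T"
    by (induction v rule: lspan.induct) (use T in \<open>auto simp: subspace_def\<close>)
qed

lemma heard_lspan: "heard (lspan S) = heard S"
proof
  show "heard (lspan S) \<subseteq> heard S"
  proof
    fix k assume "k \<in> heard (lspan S)"
    then obtain v where v: "v \<in> lspan S" "v k \<noteq> 0" by (auto simp: heard_def)
    then show "k \<in> heard S"
    proof (induction v rule: lspan.induct)
      case zero then show ?case by (simp add: zerov_def)
    next
      case (add x u c)
      then show ?case by (cases "x k = 0") (auto simp: heard_def vadd_def smul_def)
    qed
  qed
  show "heard S \<subseteq> heard (lspan S)" using lspan_sup by (auto simp: heard_def)
qed

lemma heard_Un: "heard (A \<union> B) = heard A \<union> heard B" by (auto simp: heard_def)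
lemma heard_insert: "heard (insert w A) = supp w \<union> heard A" by (auto simp: heard_def supp_def)
lemma heard_mono: "A \<subseteq> B \<Longrightarrow> heard A \<subseteq> heard B" by (auto simp: heard_def)
lemma decoded_mono: "A \<subseteq> B \<Longrightarrow> decoded A \<subseteq> decoded B" by (auto simp: decoded_def)
lemma decoded_heard: "decoded K \<subseteq> heard K"
  by (auto simp: decoded_def heard_def unitv_def intro!: bexI)

lemma supp_unitv[simp]: "supp (unitv j) = {j}" by (simp add: supp_def unitv_def)
lemma supp_vadd: "supp (vadd a b) \<subseteq> supp a \<union> supp b" by (auto simp: supp_def vadd_def)
lemma supp_smul: "supp (smul c a) \<subseteq> supp a" by (auto simp: supp_def smul_def)

lemma decode:
  assumes K: "subspace K" and F: "finite F"
  shows "v \<in> K \<Longrightarrow> supp v \<subseteq> insert j F \<Longrightarrow> \<forall>i\<in>F. unitv i \<in> K \<Longrightarrow> v j \<noteq> 0 \<Longrightarrow> unitv j \<in> K"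
  using F
proof (induction F arbitrary: v rule: finite_induct)
  case empty
  have "unitv j = smul (v j) v"
  proof
    fix k show "unitv j k = smul (v j) v k"
    proof (cases "k = j")
      case True then show ?thesis using empty sq1 by (simp add: unitv_def smul_def)
    next
      case False then have "v k = 0" using empty by (auto simp: supp_def)
      then show ?thesis using False by (simp add: unitv_def smul_def)
    qed
  qed
  then show ?case using K empty by (simp add: subspace_def)
next
  case (insert i F)
  show ?case
  proof (cases "i = j")
    case True
    then show ?thesis using insert by auto
  next
    case False
    define v' where "v' = vadd v (smul (- v i) (unitv i))"
    have "v' \<in> K" using K insert by (simp add: subspace_def v'_def)
    moreover have "supp v' \<subseteq> insert j F"
      using insert.prems(2) by (auto simp: supp_def v'_def vadd_def smul_def unitv_def split: if_splits)
    moreover have "v' j \<noteq> 0" using False insert.prems(4) by (simp add: v'_def vadd_def smul_def unitv_def)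
    ultimately show ?thesis using insert by auto
  qed
qed

lemma decode_ext:
  assumes "subspace K" "heard K \<subseteq> H \<union> supp w" "H \<subseteq> decoded K" "w \<in> K"
    "finite (supp w)" "supp w \<subseteq> insert x H"
  shows "heard K \<subseteq> decoded K"
proof
  fix j assume j: "j \<in> heard K"
  show "j \<in> decoded K"
  proof (cases "j \<in> H")
    case True then show ?thesis using assms by auto
  next
    case False
    then have jw: "j \<in> supp w" "j = x" using assms j by auto
    have "unitv j \<in> K"
      apply (rule decode[OF assms(1), of "supp w - {j}" w j])
      using assms jw by (auto simp: supp_def decoded_def)
    then show ?thesis by (simp add: decoded_def)
  qed
qed

lemma sandwich:
  assumes K: "subspace K" and h: "heard K \<subseteq> {1..n+1}" and d: "{1..n} \<subseteq> decoded K"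
  shows "heard K \<subseteq> decoded K"
proof
  fix j assume j: "j \<in> heard K"
  show "j \<in> decoded K"
  proof (cases "j \<le> n")
    case True then have "j \<in> {1..n}" using j h by auto
    then show ?thesis using d by auto
  next
    case False
    then have jn: "j = n+1" using j h by auto
    obtain v where v: "v \<in> K" "v j \<noteq> 0" using j by (auto simp: heard_def)
    have "supp v \<subseteq> heard K" using v by (auto simp: supp_def heard_def)
    have "unitv j \<in> K"
      apply (rule decode[OF K, of "{1..n}" v j])
      using v \<open>supp v \<subseteq> heard K\<close> h d jn by (auto simp: decoded_def)
    then show ?thesis by (simp add: decoded_def)
  qed
qed

definition VV :: "nat \<Rightarrow> vec set" where "VV n = {v. \<forall>k. v k \<noteq> 0 \<longrightarrow> k \<in> {1..n}}"
definition extn :: "nat \<Rightarrow> (nat \<Rightarrow> 3) \<Rightarrow> vec" where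
  "extn n f = (\<lambda>k. if k \<in> {1..n} then f k else 0)"

lemma VV_image: "VV n = extn n ` PiE {1..n} (\<lambda>_. UNIV)"
proof
  show "VV n \<subseteq> extn n ` PiE {1..n} (\<lambda>_. UNIV)"
  proof
    fix v assume v: "v \<in> VV n"
    have "v = extn n (restrict v {1..n})"
      using v unfolding VV_def extn_def fun_eq_iff restrict_def by auto
    moreover have "restrict v {1..n} \<in> PiE {1..n} (\<lambda>_. UNIV)" by simp
    ultimately show "v \<in> extn n ` PiE {1..n} (\<lambda>_. UNIV)" by (rule image_eqI)
  qed
  show "extn n ` PiE {1..n} (\<lambda>_. UNIV) \<subseteq> VV n" unfolding VV_def extn_def by (auto split: if_splits)
qed

lemma extn_inj: "inj_on (extn n) (PiE {1..n} (\<lambda>_. UNIV))"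
proof (rule inj_onI)
  fix f g assume f: "f \<in> PiE {1..n} (\<lambda>_. UNIV)" and g: "g \<in> PiE {1..n} (\<lambda>_. UNIV)"
    and e: "extn n f = extn n g"
  show "f = g"
  proof (rule PiE_ext[OF f g])
    fix i assume "i \<in> {1..n}"
    then show "f i = g i" using fun_cong[OF e, of i] by (simp add: extn_def)
  qed
qed

lemma card_PiE3: "finite A \<Longrightarrow> card (PiE A (\<lambda>_. UNIV :: 3 set)) = 3 ^ card A"
  by (simp add: card_PiE)

lemma VV_card: "card (VV n) = 3 ^ n" and VV_finite: "finite (VV n)"
proof -
  show "card (VV n) = 3 ^ n"
    unfolding VV_image card_image[OF extn_inj] by (simp add: card_PiE3)
  show "finite (VV n)" unfolding VV_image by (intro finite_imageI finite_PiE) auto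
qed

definition comb :: "vec set \<Rightarrow> (vec \<Rightarrow> 3) \<Rightarrow> vec" where
  "comb B c = (\<lambda>k. \<Sum>b\<in>B. c b * b k)"

lemma comb_in: assumes K: "subspace K" shows "finite B \<Longrightarrow> B \<subseteq> K \<Longrightarrow> comb B c \<in> K"
proof (induction B rule: finite_induct)
  case empty
  have "comb {} c = zerov" by (simp add: comb_def zerov_def)
  then show ?case using K by (simp add: subspace_def)
next
  case (insert b B)
  have "comb (insert b B) c = vadd (smul (c b) b) (comb B c)"
    using insert by (simp add: comb_def vadd_def smul_def fun_eq_iff)
  then show ?case using insert K by (simp add: subspace_def)
qed

lemma comb_VV: "B \<subseteq> VV n \<Longrightarrow> comb B c \<in> VV n"
proof -
  assume B: "B \<subseteq> VV n"
  { fix k assume "comb B c k \<noteq> 0"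
    then obtain b where "b \<in> B" "b k \<noteq> 0" unfolding comb_def
      by (metis (mono_tags, lifting) mult_zero_right sum.neutral)
    then have "k \<in> {1..n}" using B by (auto simp: VV_def) }
  then show ?thesis by (auto simp: VV_def)
qed

lemma comb_inj: assumes B: "lin_indep B" shows "inj_on (comb B) (PiE B (\<lambda>_. UNIV))"
proof (rule inj_onI)
  fix f g assume f: "f \<in> PiE B (\<lambda>_. UNIV)" and g: "g \<in> PiE B (\<lambda>_. UNIV)"
    and e: "comb B f = comb B g"
  have hk: "\<forall>k. (\<Sum>b\<in>B. (f b - g b) * b k) = 0"
  proof
    fix k
    have "(\<Sum>b\<in>B. (f b - g b) * b k) = (\<Sum>b\<in>B. f b * b k) - (\<Sum>b\<in>B. g b * b k)"
      by (simp add: algebra_simps sum_subtractf)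
    also have "\<dots> = 0" using fun_cong[OF e, of k] by (simp add: comb_def)
    finally show "(\<Sum>b\<in>B. (f b - g b) * b k) = 0" .
  qed
  have ind: "\<And>c. (\<forall>k. (\<Sum>b\<in>B. c b * b k) = 0) \<Longrightarrow> \<forall>b\<in>B. c b = 0"
    using B unfolding lin_indep_def by blast
  have "\<forall>b\<in>B. f b - g b = 0" using ind[of "\<lambda>b. f b - g b"] hk by simp
  then show "f = g" by (intro PiE_ext[OF f g]) auto
qed

lemma indep_bound:
  assumes K: "subspace K" "K \<subseteq> VV n" and B: "B \<subseteq> K" "lin_indep B"
  shows "card B \<le> n \<and> (card B = n \<longrightarrow> VV n \<subseteq> K)"
proof -
  have fB: "finite B" using B by (simp add: lin_indep_def)
  define I where "I = comb B ` PiE B (\<lambda>_. UNIV)"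
  have cI: "card I = 3 ^ card B"
    unfolding I_def by (simp add: card_image[OF comb_inj[OF B(2)]] card_PiE3[OF fB])
  have IK: "I \<subseteq> K" unfolding I_def using comb_in[OF K(1) fB B(1)] by blast
  have IV: "I \<subseteq> VV n" using IK K by blast
  have "card I \<le> card (VV n)" using IV VV_finite by (rule card_mono[rotated])
  then have "(3::nat) ^ card B \<le> 3 ^ n" using cI VV_card by simp
  then have le: "card B \<le> n" by (rule power_le_imp_le_exp[rotated]) simp
  moreover have "card B = n \<longrightarrow> VV n \<subseteq> K"
  proof
    assume "card B = n"
    then have "card I = card (VV n)" using cI VV_card by simp
    then have "I = VV n" using card_subset_eq[OF VV_finite IV] by simp
    then show "VV n \<subseteq> K" using IK by simp
  qed
  ultimately show ?thesis by blast
qed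

definition RS :: "vec set \<Rightarrow> nat set" where "RS K = {card B | B. B \<subseteq> K \<and> lin_indep B}"

lemma RS_props: assumes "subspace K" "K \<subseteq> VV n"
  shows "finite (RS K)" "RS K \<noteq> {}" "RS K \<subseteq> {..n}"
proof -
  show "RS K \<subseteq> {..n}" using indep_bound[OF assms] by (auto simp: RS_def)
  then show "finite (RS K)" by (rule finite_subset) simp
  have "lin_indep {}" by (simp add: lin_indep_def)
  then show "RS K \<noteq> {}" by (auto simp: RS_def)
qed

lemma rank_ge: assumes "subspace K" "K \<subseteq> VV n" "B \<subseteq> K" "lin_indep B"
  shows "card B \<le> rank K"
proof -
  have "card B \<in> RS K" using assms by (auto simp: RS_def)
  then have "card B \<le> Max (RS K)" using RS_props[OF assms(1,2)] by simp
  then show ?thesis unfolding rank_def RS_def by simp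
qed

lemma rank_le: assumes "subspace K" "K \<subseteq> VV n"
  shows "rank K \<le> n \<and> (rank K = n \<longrightarrow> VV n \<subseteq> K)"
proof -
  have "Max (RS K) \<in> RS K" by (rule Max_in[OF RS_props(1,2)[OF assms]])
  then have "rank K \<in> RS K" unfolding rank_def RS_def by simp
  then obtain B where "B \<subseteq> K" "lin_indep B" "rank K = card B" by (auto simp: RS_def)
  then show ?thesis using indep_bound[OF assms] by auto
qed

lemma unitv_inj: "inj unitv"
proof (rule injI)
  fix i j assume "unitv i = unitv j"
  then have "unitv i i = unitv j i" by simp
  then show "i = j" by (simp add: unitv_def split: if_splits)
qed

lemma units_indep: assumes "finite A" shows "lin_indep (unitv ` A)"
proof -
  { fix c :: "vec \<Rightarrow> 3" assume h: "\<forall>k. (\<Sum>b\<in>unitv ` A. c b * b k) = 0"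
    { fix j assume j: "j \<in> A"
      have "(\<Sum>b\<in>unitv ` A. c b * b j) = (\<Sum>i\<in>A. c (unitv i) * unitv i j)"
        by (simp add: sum.reindex[OF inj_on_subset[OF unitv_inj]])
      also have "\<dots> = (\<Sum>i\<in>A. if j = i then c (unitv i) else 0)"
        by (rule sum.cong) (auto simp: unitv_def)
      also have "\<dots> = c (unitv j)" using j assms by simp
      finally have "c (unitv j) = 0" using h by simp }
    then have "\<forall>b\<in>unitv ` A. c b = 0" by auto }
  then show ?thesis using assms by (simp add: lin_indep_def)
qed

lemma card_units: "card (unitv ` A) = card A"
  by (rule card_image[OF inj_on_subset[OF unitv_inj]]) simp

lemma heard_VV: "heard K \<subseteq> {1..n} \<Longrightarrow> K \<subseteq> VV n"
  by (auto simp: heard_def VV_def)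

lemma unitv_VV: "j \<in> {1..n} \<Longrightarrow> unitv j \<in> VV n"
  by (auto simp: VV_def unitv_def)

lemma rank_ge_dec: assumes "subspace K" "heard K \<subseteq> {1..n}" "{1..m} \<subseteq> decoded K"
  shows "m \<le> rank K"
proof -
  have "card (unitv ` {1..m}) \<le> rank K"
  proof (rule rank_ge[OF assms(1) heard_VV[OF assms(2)]])
    show "unitv ` {1..m} \<subseteq> K" using assms(3) unfolding decoded_def by blast
    show "lin_indep (unitv ` {1..m})" by (rule units_indep) simp
  qed
  moreover have "card (unitv ` {1..m}) = m" unfolding card_units by simp
  ultimately show ?thesis by simp
qed

lemma rank_full_dec: assumes "subspace K" "heard K \<subseteq> {1..n}"
  shows "rank K \<le> n \<and> (rank K = n \<longrightarrow> {1..n} \<subseteq> decoded K)"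
proof -
  have r: "rank K \<le> n \<and> (rank K = n \<longrightarrow> VV n \<subseteq> K)" by (rule rank_le[OF assms(1) heard_VV[OF assms(2)]])
  have "VV n \<subseteq> K \<Longrightarrow> {1..n} \<subseteq> decoded K"
  proof
    fix j assume "VV n \<subseteq> K" "j \<in> {1..n}"
    then show "j \<in> decoded K" using unitv_VV[of j n] by (auto simp: decoded_def)
  qed
  then show ?thesis using r by blast
qed

definition GoodN :: "nat \<Rightarrow> nat set \<Rightarrow> nat set \<Rightarrow> vec \<Rightarrow> bool" where
  "GoodN m Q DN w \<longleftrightarrow> supp w \<subseteq> {1..m+1} \<and> (\<exists>x. supp w \<subseteq> insert x Q) \<and> (\<exists>x. supp w \<subseteq> insert x DN)"

lemma good_pair:
  assumes "supp w \<subseteq> {a,b}" "a \<in> {1..m+1}" "b \<in> {1..m+1}" "a \<in> Q \<or> b \<in> Q" "a \<in> DN \<or> b \<in> DN"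
  shows "GoodN m Q DN w"
proof -
  have 1: "supp w \<subseteq> {1..m+1}" using assms(1-3) by blast
  have 2: "\<exists>x. supp w \<subseteq> insert x Q"
  proof (cases "a \<in> Q")
    case True then show ?thesis using assms(1) by (intro exI[of _ b]) blast
  next
    case False then show ?thesis using assms(1,4) by (intro exI[of _ a]) blast
  qed
  have 3: "\<exists>x. supp w \<subseteq> insert x DN"
  proof (cases "a \<in> DN")
    case True then show ?thesis using assms(1) by (intro exI[of _ b]) blast
  next
    case False then show ?thesis using assms(1,5) by (intro exI[of _ a]) blast
  qed
  show ?thesis using 1 2 3 by (simp add: GoodN_def)
qed

lemma good_single: "supp w \<subseteq> {a} \<Longrightarrow> a \<in> {1..m+1} \<Longrightarrow> GoodN m Q DN w"
  unfolding GoodN_def by (intro conjI exI[of _ a]) auto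

lemma good_ext:
  assumes "GoodN m Q DN w" "a \<in> {1..m+1}" "a \<in> Q" "a \<in> DN" "supp w' \<subseteq> insert a (supp w)"
  shows "GoodN m Q DN w'"
proof -
  obtain x y where "supp w \<subseteq> {1..m+1}" "supp w \<subseteq> insert x Q" "supp w \<subseteq> insert y DN"
    using assms(1) by (auto simp: GoodN_def)
  then have "supp w' \<subseteq> {1..m+1}" "supp w' \<subseteq> insert x Q" "supp w' \<subseteq> insert y DN"
    using assms(2-5) by blast+
  then show ?thesis by (auto simp: GoodN_def)
qed

lemma supp_pair: "supp (vadd (unitv a) (unitv b)) \<subseteq> {a,b}"
  using supp_vadd[of "unitv a" "unitv b"] by auto
lemma supp_pair_c: "supp (vadd (unitv a) (smul c (unitv b))) \<subseteq> {a,b}"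
  using supp_vadd[of "unitv a" "smul c (unitv b)"] supp_smul[of c "unitv b"] by auto
lemma supp_ins: "supp (vadd (unitv a) w) \<subseteq> insert a (supp w)"
  using supp_vadd[of "unitv a" w] by simp

lemma fn_some: "first_nonempty As = Some A \<Longrightarrow> A \<in> set As \<and> A \<noteq> {}"
  by (induction As) (auto split: if_splits)

lemma fn3: "first_nonempty [A,B,C] = Some X \<Longrightarrow>
   (X = A \<and> A \<noteq> {}) \<or> (A = {} \<and> X = B \<and> B \<noteq> {}) \<or> (A = {} \<and> B = {} \<and> X = C \<and> C \<noteq> {})"
  by (auto split: if_splits)

lemma Min_mem: "A \<subseteq> {1..(n::nat)} \<Longrightarrow> A \<noteq> {} \<Longrightarrow> Min A \<in> A"
proof (rule Min_in)
  assume "A \<subseteq> {1..n}" then show "finite A" by (rule finite_subset) simp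
qed

lemma case1_good:
  assumes c: "case1 [S1,S2,S3,S4,S5,S6] = Some w"
    and R: "S2 \<subseteq> {1..m+1}" "S3 \<subseteq> {1..m+1}" "S4 \<subseteq> {1..m+1}" "S5 \<subseteq> {1..m+1}" "S6 \<subseteq> {1..m+1}"
    and Q: "S2 \<subseteq> Q" "S3 \<subseteq> Q" "S4 \<subseteq> Q" and N: "S2 \<subseteq> DN" "S3 \<subseteq> DN"
  shows "GoodN m Q DN w"
proof -
  note defs = case1_def Let_def
  show ?thesis
  proof (cases "S2 \<noteq> {} \<and> S4 \<noteq> {}")
    case True
    then have w: "w = vadd (unitv (Min S2)) (unitv (Min S4))" using c by (simp add: defs)
    have "Min S2 \<in> S2" "Min S4 \<in> S4" using True R Min_mem by blast+
    then show ?thesis unfolding w using R Q N by (intro good_pair[OF supp_pair]) blast+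
  next
    case F1: False
    show ?thesis
    proof (cases "S3 \<noteq> {} \<and> S4 \<noteq> {}")
      case True
      then have w: "w = vadd (unitv (Min S3)) (unitv (Min S4))" using c F1 by (simp add: defs)
      have "Min S3 \<in> S3" "Min S4 \<in> S4" using True R Min_mem by blast+
      then show ?thesis unfolding w using R Q N by (intro good_pair[OF supp_pair]) blast+
    next
      case False
      then obtain A where A: "first_nonempty [S5, S6, S2, S3, S4] = Some A" "w = unitv (Min A)"
        using c F1 by (auto simp: defs split: option.splits)
      then have "A \<in> {S5, S6, S2, S3, S4}" "A \<noteq> {}" using fn_some[OF A(1)] by auto
      then have "A \<subseteq> {1..m+1}" "A \<noteq> {}" using R by auto
      then have "Min A \<in> {1..m+1}" using Min_mem by blast
      then show ?thesis unfolding A(2) by (intro good_single) auto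
    qed
  qed
qed

lemma trans_good:
  assumes eqs: "decoded (know s (lN s)) = DN" "decoded (know s (lD s)) = DD"
      "heard (know s (lD s)) = HD" "mm s = m"
    and HD: "HD \<subseteq> {1..m+1}" and DN: "DN \<subseteq> {1..m+1}" and DDHD: "DD \<subseteq> HD"
    and key: "DN \<inter> (HD - DD) = {} \<Longrightarrow> HD \<subseteq> DD"
    and v: "Some w \<in> transmissions s arr"
  shows "GoodN m (HD \<union> DN) DN w \<or> (GoodN m (HD \<union> DN) DD w \<and> HD \<subseteq> DD)"
proof -
  define U where "U = {1..m} \<union> (if arr then {m+1} else {})"
  define S1 where "S1 = DN \<inter> DD"
  define S2 where "S2 = DN \<inter> (HD - DD)"
  define S3 where "S3 = DN - HD"
  define S4 where "S4 = DD - DN"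
  define S5 where "S5 = (HD - DD) - DN"
  define S6 where "S6 = U - (HD \<union> DN)"
  define Q where "Q = HD \<union> DN"
  define q where "q = m + 1"
  have S: "Sets s arr = [S1,S2,S3,S4,S5,S6]"
    unfolding Sets_def Let_def eqs S1_def S2_def S3_def S4_def S5_def S6_def U_def by simp
  have R: "S1 \<subseteq> {1..m+1}" "S2 \<subseteq> {1..m+1}" "S3 \<subseteq> {1..m+1}" "S4 \<subseteq> {1..m+1}"
    "S5 \<subseteq> {1..m+1}" "S6 \<subseteq> {1..m+1}"
    using HD DN DDHD unfolding S1_def S2_def S3_def S4_def S5_def S6_def U_def by auto
  have SQ: "S1 \<subseteq> Q" "S2 \<subseteq> Q" "S3 \<subseteq> Q" "S4 \<subseteq> Q" "S5 \<subseteq> Q"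
    using DDHD unfolding S1_def S2_def S3_def S4_def S5_def Q_def by auto
  have SN: "S1 \<subseteq> DN" "S2 \<subseteq> DN" "S3 \<subseteq> DN" using DDHD unfolding S1_def S2_def S3_def by auto
  have qR: "q \<in> {1..m+1}" unfolding q_def by simp
  have c1: "GoodN m Q DN w0" if "case1 [S1,S2,S3,S4,S5,S6] = Some w0" for w0
    using case1_good[OF that R(2-6) SQ(2-4) SN(2-3)] .
  have T0: "Some w \<in> transmissions s arr" by (rule v)
  have nth: "[S1,S2,S3,S4,S5,S6] ! 0 = S1" "[S1,S2,S3,S4,S5,S6] ! 1 = S2" "[S1,S2,S3,S4,S5,S6] ! 2 = S3"
    "[S1,S2,S3,S4,S5,S6] ! 3 = S4" "[S1,S2,S3,S4,S5,S6] ! 4 = S5" "[S1,S2,S3,S4,S5,S6] ! 5 = S6" by simp_all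
  note T = T0[unfolded transmissions_def Let_def S eqs(4) nth, folded q_def]
  show ?thesis
  proof (cases arr)
    case False
    then have "case1 [S1,S2,S3,S4,S5,S6] = Some w" using T by simp
    then show ?thesis using c1 Q_def by blast
  next
    case arr: True
    show ?thesis
    proof (cases "q \<in> S1")
      case True
      then have w: "w = (case case1 [S1,S2,S3,S4,S5,S6] of None \<Rightarrow> unitv q | Some w0 \<Rightarrow> vadd (unitv q) w0)"
        using T arr by simp
      have "GoodN m Q DN w"
      proof (cases "case1 [S1,S2,S3,S4,S5,S6]")
        case None then show ?thesis using w qR by (simp add: good_single)
      next
        case (Some w0)
        then have g0: "GoodN m Q DN w0" by (rule c1)
        have w': "w = vadd (unitv q) w0" using w Some by simp
        show ?thesis unfolding w' by (rule good_ext[OF g0 _ _ _ supp_ins]) (use True R SQ SN qR in auto)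
      qed
      then show ?thesis using Q_def by blast
    next
      case nS1: False
      show ?thesis
      proof (cases "q \<in> S2")
        case True
        have "GoodN m Q DN w"
        proof (cases "first_nonempty [S4,S5,S6]")
          case None
          then have "w = unitv q" using T arr nS1 True by (simp del: first_nonempty.simps)
          then show ?thesis using qR by (simp add: good_single)
        next
          case (Some A)
          then obtain c where A: "w = vadd (unitv q) (smul c (unitv (Min A)))"
            using T arr nS1 True by (auto simp del: first_nonempty.simps)
          have "A \<in> {S4,S5,S6}" "A \<noteq> {}" using fn_some[OF Some] by auto
          then have "Min A \<in> {1..m+1}" using R Min_mem by blast
          then show ?thesis unfolding A using True SQ SN qR by (intro good_pair[OF supp_pair_c]) auto
        qed
        then show ?thesis using Q_def by blast
      next
        case nS2: False
        show ?thesis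
        proof (cases "q \<in> S3")
          case True
          have "GoodN m Q DN w"
          proof (cases "first_nonempty [S4,S5,S6]")
            case None
            then have "w = unitv q" using T arr nS1 nS2 True by (simp del: first_nonempty.simps)
            then show ?thesis using qR by (simp add: good_single)
          next
            case (Some A)
            then have A: "w = vadd (unitv q) (unitv (Min A))"
              using T arr nS1 nS2 True by (simp del: first_nonempty.simps)
            have "A \<in> {S4,S5,S6}" "A \<noteq> {}" using fn_some[OF Some] by auto
            then have "Min A \<in> {1..m+1}" using R Min_mem by blast
            then show ?thesis unfolding A using True SQ SN qR by (intro good_pair[OF supp_pair]) auto
          qed
          then show ?thesis using Q_def by blast
        next
          case nS3: False
          show ?thesis
          proof (cases "q \<in> S4")
            case True
            show ?thesis
            proof (cases "first_nonempty [S2,S3,S6]")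
              case None
              then have "w = unitv q" using T arr nS1 nS2 nS3 True by (simp del: first_nonempty.simps)
              then show ?thesis using qR Q_def by (simp add: good_single)
            next
              case (Some A)
              then have A2: "w = vadd (unitv q) (unitv (Min A))"
                using T arr nS1 nS2 nS3 True by (simp del: first_nonempty.simps)
              note A = Some A2
              have "A \<in> {S2,S3,S6}" "A \<noteq> {}" using fn_some[OF A(1)] by auto
              then have MR: "Min A \<in> {1..m+1}" using R Min_mem by blast
              from fn3[OF A(1)] show ?thesis
              proof (elim disjE conjE)
                assume "A = S2" "S2 \<noteq> {}"
                then have "Min A \<in> S2" using R Min_mem by blast
                then have "GoodN m Q DN w" unfolding A(2) using True SQ SN qR MR
                  by (intro good_pair[OF supp_pair]) auto
                then show ?thesis using Q_def by blast
              next
                assume "A = S3" "S3 \<noteq> {}"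
                then have "Min A \<in> S3" using R Min_mem by blast
                then have "GoodN m Q DN w" unfolding A(2) using True SQ SN qR MR
                  by (intro good_pair[OF supp_pair]) auto
                then show ?thesis using Q_def by blast
              next
                assume e: "S2 = {}" "S3 = {}" "A = S6" "S6 \<noteq> {}"
                have "HD \<subseteq> DD" using key e(1) unfolding S2_def by blast
                moreover have "GoodN m Q DD w" unfolding A(2) using True SQ qR MR
                  unfolding S4_def by (intro good_pair[OF supp_pair]) auto
                ultimately show ?thesis using Q_def by blast
              qed
            qed
          next
            case nS4: False
            then have "w = unitv q" using T arr nS1 nS2 nS3 by (simp del: first_nonempty.simps)
            then show ?thesis using qR Q_def by (simp add: good_single)
          qed
        qed
      qed
    qed
  qed
qed

definition pureK :: "vec set \<Rightarrow> bool" where "pureK K \<longleftrightarrow> heard K \<subseteq> decoded K"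

lemma pureK_unsolved: "pureK K \<longleftrightarrow> unsolved K = {}"
  by (auto simp: pureK_def unsolved_def)

lemma lspan_union_decomp:
  assumes A: "subspace A" and B: "subspace B"
  shows "v \<in> lspan (A \<union> B) \<Longrightarrow> \<exists>x\<in>A. \<exists>y\<in>B. v = vadd x y"
proof (induction v rule: lspan.induct)
  case zero
  have "zerov = vadd zerov zerov" by simp
  then show ?case using A B unfolding subspace_def by blast
next
  case (add u r c)
  then obtain x y where xy: "x \<in> A" "y \<in> B" "r = vadd x y" by blast
  show ?case
  proof (cases "u \<in> A")
    case True
    have "vadd (smul c u) r = vadd (vadd (smul c u) x) y" by (simp add: xy vadd_def add.assoc)
    moreover have "vadd (smul c u) x \<in> A" using A True xy by (simp add: subspace_def)
    ultimately show ?thesis using xy by blast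
  next
    case False
    then have "u \<in> B" using add by blast
    have "vadd (smul c u) r = vadd x (vadd (smul c u) y)" by (simp add: xy vadd_def algebra_simps)
    moreover have "vadd (smul c u) y \<in> B" using B \<open>u \<in> B\<close> xy by (simp add: subspace_def)
    ultimately show ?thesis using xy by blast
  qed
qed

lemma key_lemma:
  assumes KN: "subspace KN" and KD: "subspace KD" and pN: "pureK KN" and fN: "finite (heard KN)"
    and pS: "pureK (lspan (KN \<union> KD))"
    and e: "decoded KN \<inter> (heard KD - decoded KD) = {}"
  shows "heard KD \<subseteq> decoded KD"
proof
  fix j assume jH: "j \<in> heard KD"
  show "j \<in> decoded KD"
  proof (rule ccontr)
    assume jD: "j \<notin> decoded KD"
    have jN: "j \<notin> heard KN" using jH jD e pN by (auto simp: pureK_def)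
    have "j \<in> heard (lspan (KN \<union> KD))" using jH by (simp add: heard_lspan heard_Un)
    then have "unitv j \<in> lspan (KN \<union> KD)" using pS by (auto simp: pureK_def decoded_def)
    then obtain a b where ab: "a \<in> KN" "b \<in> KD" "unitv j = vadd a b"
      using lspan_union_decomp[OF KN KD] by blast
    have aj: "a j = 0" using ab(1) jN by (auto simp: heard_def)
    have bj: "b j = 1" using fun_cong[OF ab(3), of j] aj by (simp add: unitv_def vadd_def)
    have sb: "supp b \<subseteq> insert j (heard KN)"
    proof
      fix i assume "i \<in> supp b"
      then have "b i \<noteq> 0" by (simp add: supp_def)
      show "i \<in> insert j (heard KN)"
      proof (cases "i = j")
        case False
        then have "a i + b i = 0" using fun_cong[OF ab(3), of i] by (simp add: unitv_def vadd_def)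
        then have "a i \<noteq> 0" using \<open>b i \<noteq> 0\<close> by auto
        then show ?thesis using ab(1) by (auto simp: heard_def)
      qed simp
    qed
    have units: "\<forall>i\<in>supp b - {j}. unitv i \<in> KD"
    proof
      fix i assume i: "i \<in> supp b - {j}"
      then have "i \<in> heard KN" using sb by blast
      then have "i \<in> decoded KN" using pN by (auto simp: pureK_def)
      moreover have "i \<in> heard KD" using i ab(2) by (auto simp: supp_def heard_def)
      ultimately have "i \<in> decoded KD" using e by blast
      then show "unitv i \<in> KD" by (simp add: decoded_def)
    qed
    have "finite (supp b - {j})" using sb fN by (rule_tac finite_subset[of _ "heard KN"]) auto
    then have "unitv j \<in> KD" by (rule decode[OF KD _ ab(2) _ units]) (use bj in auto)
    then show False using jD by (simp add: decoded_def)
  qed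
qed

lemma upd_facts:
  assumes "subspace K" "heard K \<subseteq> {1..n}" "supp w \<subseteq> {1..n}" "K' = K \<or> K' = lspan (insert w K)"
  shows "subspace K' \<and> K \<subseteq> K' \<and> heard K' \<subseteq> {1..n} \<and> heard K' \<subseteq> heard K \<union> supp w"
proof -
  have "subspace K' \<and> K \<subseteq> K' \<and> heard K' \<subseteq> heard K \<union> supp w"
    using assms lspan_subspace[of "insert w K"] lspan_sup[of "insert w K"]
    by (auto simp: heard_lspan heard_insert)
  then show ?thesis using assms(2,3) by blast
qed

lemma ext_pure:
  assumes K: "subspace K" and h: "heard K \<subseteq> H" "H \<subseteq> decoded K"
    and K': "K' = K \<or> K' = lspan (insert w K)" and f: "finite (supp w)" and sx: "supp w \<subseteq> insert x H"
  shows "pureK K'"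
  using K'
proof
  assume "K' = K" then show ?thesis using h by (auto simp: pureK_def)
next
  assume e: "K' = lspan (insert w K)"
  have "heard K' \<subseteq> decoded K'"
  proof (rule decode_ext[of K' H w x])
    show "subspace K'" using e lspan_subspace by simp
    show "heard K' \<subseteq> H \<union> supp w" using e h by (auto simp: heard_lspan heard_insert)
    have "K \<subseteq> K'" using e lspan_sup by blast
    then show "H \<subseteq> decoded K'" using h decoded_mono by blast
    show "w \<in> K'" using e lspan_sup by blast
  qed (use f sx in auto)
  then show ?thesis by (simp add: pureK_def)
qed

lemma sum_pure:
  assumes A: "subspace A" and B: "subspace B" and pS: "pureK (lspan (A \<union> B))"
    and A': "A' = A \<or> A' = lspan (insert w A)" and B': "B' = B \<or> B' = lspan (insert w B)"
    and f: "finite (supp w)" and sx: "supp w \<subseteq> insert x (heard A \<union> heard B)"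
  shows "pureK (lspan (A' \<union> B'))"
proof (cases "A' = A \<and> B' = B")
  case True then show ?thesis using pS by simp
next
  case False
  define S' where "S' = lspan (A' \<union> B')"
  have AA: "A \<subseteq> A'" using A' lspan_sup by blast
  have BB: "B \<subseteq> B'" using B' lspan_sup by blast
  have sub: "lspan (A \<union> B) \<subseteq> S'" unfolding S'_def
    using AA BB by (intro lspan_least[OF lspan_subspace]) (use lspan_sup in blast)
  have wS: "w \<in> S'" using False A' B' lspan_sup[of "A' \<union> B'"] lspan_sup[of "insert w A"]
      lspan_sup[of "insert w B"] unfolding S'_def by blast
  have hA: "heard A' \<subseteq> heard A \<union> supp w" using A' by (auto simp: heard_lspan heard_insert)
  have hB: "heard B' \<subseteq> heard B \<union> supp w" using B' by (auto simp: heard_lspan heard_insert)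
  have "heard S' \<subseteq> decoded S'"
  proof (rule decode_ext[of S' "heard A \<union> heard B" w x])
    show "subspace S'" unfolding S'_def by (rule lspan_subspace)
    show "heard S' \<subseteq> heard A \<union> heard B \<union> supp w" unfolding S'_def
      using hA hB by (auto simp: heard_lspan heard_Un)
    have "heard A \<union> heard B \<subseteq> decoded (lspan (A \<union> B))" using pS
      by (simp add: pureK_def heard_lspan heard_Un)
    then show "heard A \<union> heard B \<subseteq> decoded S'" using decoded_mono[OF sub] by blast
  qed (use wS f sx in auto)
  then show ?thesis by (simp add: pureK_def S'_def)
qed

lemma labels3: assumes "{a,b,c} = {1,2,3::nat}"
  shows "a \<noteq> b \<and> a \<noteq> c \<and> b \<noteq> c \<and> a \<in> {1,2,3} \<and> b \<in> {1,2,3} \<and> c \<in> {1,2,3} \<and> (\<forall>i\<in>{1,2,3}. i = a \<or> i = b \<or> i = c)"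
proof -
  have "card {a,b,c} = 3" using assms by simp
  then have "a \<noteq> b \<and> a \<noteq> c \<and> b \<noteq> c" by (auto simp: card_insert_if split: if_splits)
  moreover have "a \<in> {1,2,3} \<and> b \<in> {1,2,3} \<and> c \<in> {1,2,3}" using assms by blast
  moreover have "\<forall>i\<in>{1,2,3}. i = a \<or> i = b \<or> i = c" using assms by blast
  ultimately show ?thesis by blast
qed

definition Inv :: "state \<Rightarrow> bool" where
  "Inv s \<longleftrightarrow> {lL s, lN s, lD s} = {1,2,3} \<and>
     (\<forall>i\<in>{1,2,3}. subspace (know s i) \<and> heard (know s i) \<subseteq> {1..mm s + 1}) \<and>
     {1..mm s} \<subseteq> decoded (know s (lL s)) \<and> pureK (know s (lN s)) \<and>
     pureK (lspan (know s (lN s) \<union> know s (lD s)))"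

lemma core_after:
  fixes K K' :: "nat \<Rightarrow> vec set" and L N D m :: nat
  assumes lab: "{L,N,D} = {1,2,3}"
    and sub: "\<forall>i\<in>{1,2,3}. subspace (K i) \<and> heard (K i) \<subseteq> {1..m + 1}"
    and decL: "{1..m} \<subseteq> decoded (K L)" and pN: "pureK (K N)"
    and pS: "pureK (lspan (K N \<union> K D))"
    and upd: "K' = K \<or> (\<exists>w. (GoodN m (heard (K D) \<union> decoded (K N)) (decoded (K N)) w \<or>
        (GoodN m (heard (K D) \<union> decoded (K N)) (decoded (K D)) w \<and> heard (K D) \<subseteq> decoded (K D))) \<and>
        (\<forall>i. K' i = K i \<or> K' i = lspan (insert w (K i))))"
  shows "(\<forall>i\<in>{1,2,3}. subspace (K' i) \<and> heard (K' i) \<subseteq> {1..m + 1} \<and> K i \<subseteq> K' i)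
     \<and> pureK (K' L) \<and> (pureK (K' N) \<or> pureK (K' D)) \<and> pureK (lspan (K' N \<union> K' D))"
proof -
  have L3: "L \<in> {1,2,3}" "N \<in> {1,2,3}" "D \<in> {1,2,3}" using labels3[OF lab] by auto
  have sN: "subspace (K N)" and sD: "subspace (K D)" using sub L3 by auto
  show ?thesis using upd
  proof
    assume "K' = K"
    moreover have "pureK (K L)"
      using sandwich[of "K L" m] sub L3 decL by (auto simp: pureK_def)
    ultimately show ?thesis using sub pN pS by auto
  next
    assume "\<exists>w. (GoodN m (heard (K D) \<union> decoded (K N)) (decoded (K N)) w \<or>
        (GoodN m (heard (K D) \<union> decoded (K N)) (decoded (K D)) w \<and> heard (K D) \<subseteq> decoded (K D))) \<and>
        (\<forall>i. K' i = K i \<or> K' i = lspan (insert w (K i)))"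
    then obtain w where G: "GoodN m (heard (K D) \<union> decoded (K N)) (decoded (K N)) w \<or>
        (GoodN m (heard (K D) \<union> decoded (K N)) (decoded (K D)) w \<and> heard (K D) \<subseteq> decoded (K D))"
      and u: "\<forall>i. K' i = K i \<or> K' i = lspan (insert w (K i))" by blast
    have sw: "supp w \<subseteq> {1..m+1}" using G by (auto simp: GoodN_def)
    have fw: "finite (supp w)" using sw by (rule finite_subset) simp
    obtain x where xQ: "supp w \<subseteq> insert x (heard (K D) \<union> decoded (K N))" using G by (auto simp: GoodN_def)
    have C1: "\<forall>i\<in>{1,2,3}. subspace (K' i) \<and> heard (K' i) \<subseteq> {1..m + 1} \<and> K i \<subseteq> K' i"
    proof
      fix i :: nat assume i: "i \<in> {1,2,3}"
      have "subspace (K' i) \<and> K i \<subseteq> K' i \<and> heard (K' i) \<subseteq> {1..m+1} \<and> heard (K' i) \<subseteq> heard (K i) \<union> supp w"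
        using sub i sw u by (intro upd_facts) auto
      then show "subspace (K' i) \<and> heard (K' i) \<subseteq> {1..m + 1} \<and> K i \<subseteq> K' i" by blast
    qed
    have C2: "pureK (K' L)"
    proof -
      have "{1..m} \<subseteq> decoded (K' L)" using decL C1 L3 decoded_mono by blast
      then show ?thesis using sandwich[of "K' L" m] C1 L3 by (auto simp: pureK_def)
    qed
    have C3: "pureK (K' N) \<or> pureK (K' D)"
      using G
    proof
      assume g: "GoodN m (heard (K D) \<union> decoded (K N)) (decoded (K N)) w"
      then obtain y where "supp w \<subseteq> insert y (decoded (K N))" by (auto simp: GoodN_def)
      then have y: "supp w \<subseteq> insert y (heard (K N))" using decoded_heard by blast
      have "pureK (K' N)"
        by (rule ext_pure[OF sN _ _ _ fw y]) (use pN u in \<open>auto simp: pureK_def\<close>)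
      then show ?thesis by blast
    next
      assume g: "GoodN m (heard (K D) \<union> decoded (K N)) (decoded (K D)) w \<and> heard (K D) \<subseteq> decoded (K D)"
      then obtain y where "supp w \<subseteq> insert y (decoded (K D))" by (auto simp: GoodN_def)
      then have y: "supp w \<subseteq> insert y (heard (K D))" using decoded_heard by blast
      have "pureK (K' D)"
        by (rule ext_pure[OF sD _ _ _ fw y]) (use g u in auto)
      then show ?thesis by blast
    qed
    have C4: "pureK (lspan (K' N \<union> K' D))"
    proof (rule sum_pure[OF sN sD pS _ _ fw])
      show "K' N = K N \<or> K' N = lspan (insert w (K N))" using u by blast
      show "K' D = K D \<or> K' D = lspan (insert w (K D))" using u by blast
      show "supp w \<subseteq> insert x (heard (K N) \<union> heard (K D))" using xQ decoded_heard by blast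
    qed
    show ?thesis using C1 C2 C3 C4 by blast
  qed
qed

lemma step_inv:
  assumes I: "Inv s" and st: "step arr rcv s s'"
  shows "Inv s'"
proof -
  obtain v where v: "v \<in> transmissions s (mm s + 1 \<le> arr)"
    and kn: "know s' = (\<lambda>i. case v of None \<Rightarrow> know s i
                                | Some w \<Rightarrow> if rcv i then lspan (insert w (know s i)) else know s i)"
    and mm': "mm s' = Max ((\<lambda>i. rank (know s' i)) ` {1, 2, 3})"
    and lab: "labels_ok (know s') (mm s') (lL s') (lN s') (lD s')"
    using st unfolding step_def by blast
  define K where "K = know s"
  define K' where "K' = know s'"
  define L where "L = lL s"
  define N where "N = lN s"
  define D where "D = lD s"
  define m where "m = mm s"
  define m' where "m' = mm s'"
  have labs: "{L,N,D} = {1,2,3}"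
    and sub: "\<forall>i\<in>{1,2,3}. subspace (K i) \<and> heard (K i) \<subseteq> {1..m + 1}"
    and decL: "{1..m} \<subseteq> decoded (K L)" and pN: "pureK (K N)"
    and pS: "pureK (lspan (K N \<union> K D))"
    using I unfolding Inv_def K_def L_def N_def D_def m_def by auto
  have L3: "L \<in> {1,2,3}" "N \<in> {1,2,3}" "D \<in> {1,2,3}" and dst: "L \<noteq> N" "L \<noteq> D" "N \<noteq> D"
    using labels3[OF labs] by auto
  have sN: "subspace (K N)" "heard (K N) \<subseteq> {1..m+1}" and sD: "subspace (K D)" "heard (K D) \<subseteq> {1..m+1}"
    using sub L3 by auto
  have fN: "finite (heard (K N))" using sN(2) by (rule finite_subset) simp
  have key: "decoded (K N) \<inter> (heard (K D) - decoded (K D)) = {} \<Longrightarrow> heard (K D) \<subseteq> decoded (K D)"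
    by (rule key_lemma[OF sN(1) sD(1) pN fN pS])
  have upd: "K' = K \<or> (\<exists>w. (GoodN m (heard (K D) \<union> decoded (K N)) (decoded (K N)) w \<or>
        (GoodN m (heard (K D) \<union> decoded (K N)) (decoded (K D)) w \<and> heard (K D) \<subseteq> decoded (K D))) \<and>
        (\<forall>i. K' i = K i \<or> K' i = lspan (insert w (K i))))"
  proof (cases v)
    case None
    then have "K' = K" unfolding K'_def K_def kn by simp
    then show ?thesis by blast
  next
    case (Some w)
    have G: "GoodN m (heard (K D) \<union> decoded (K N)) (decoded (K N)) w \<or>
        (GoodN m (heard (K D) \<union> decoded (K N)) (decoded (K D)) w \<and> heard (K D) \<subseteq> decoded (K D))"
    proof (rule trans_good)
      show "decoded (know s (lN s)) = decoded (K N)" "decoded (know s (lD s)) = decoded (K D)"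
        "heard (know s (lD s)) = heard (K D)" "mm s = m" by (simp_all add: K_def N_def D_def m_def)
      show "heard (K D) \<subseteq> {1..m+1}" by (rule sD(2))
      show "decoded (K N) \<subseteq> {1..m+1}" using sN(2) decoded_heard by blast
      show "decoded (K D) \<subseteq> heard (K D)" by (rule decoded_heard)
      show "decoded (K N) \<inter> (heard (K D) - decoded (K D)) = {} \<Longrightarrow> heard (K D) \<subseteq> decoded (K D)" by (rule key)
      show "Some w \<in> transmissions s (mm s + 1 \<le> arr)" using v Some by simp
    qed
    moreover have "\<forall>i. K' i = K i \<or> K' i = lspan (insert w (K i))"
      unfolding K'_def K_def kn Some by simp
    ultimately show ?thesis by blast
  qed
  have C: "(\<forall>i\<in>{1,2,3}. subspace (K' i) \<and> heard (K' i) \<subseteq> {1..m + 1} \<and> K i \<subseteq> K' i)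
     \<and> pureK (K' L) \<and> (pureK (K' N) \<or> pureK (K' D)) \<and> pureK (lspan (K' N \<union> K' D))"
    by (rule core_after[OF labs sub decL pN pS upd])
  then have C1: "\<forall>i\<in>{1,2,3}. subspace (K' i) \<and> heard (K' i) \<subseteq> {1..m + 1} \<and> K i \<subseteq> K' i"
    and C2: "pureK (K' L)" and C3: "pureK (K' N) \<or> pureK (K' D)" and C4: "pureK (lspan (K' N \<union> K' D))"
    by blast+
  have decL': "{1..m} \<subseteq> decoded (K' L)" using decL C1 L3 decoded_mono by blast
  have rk: "\<forall>i\<in>{1,2,3}. rank (K' i) \<le> m+1 \<and> (rank (K' i) = m+1 \<longrightarrow> {1..m+1} \<subseteq> decoded (K' i))"
    using C1 rank_full_dec by blast
  have rL: "m \<le> rank (K' L)" using rank_ge_dec[of "K' L" "m+1" m] C1 L3 decL' by blast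
  have m'def: "m' = Max ((\<lambda>i. rank (K' i)) ` {1, 2, 3})" using mm' by (simp add: m'_def K'_def)
  have m'in: "m' \<in> (\<lambda>i. rank (K' i)) ` {1, 2, 3}" unfolding m'def by (rule Max_in) auto
  have m'ge: "rank (K' L) \<le> m'" unfolding m'def using L3 by (intro Max_ge) auto
  have mm: "m \<le> m'" "m' \<le> m+1" using rL m'ge m'in rk by auto
  define Cs where "Cs = {i \<in> {1, 2, 3}. {1..m'} \<subseteq> decoded (K' i)}"
  have Cne: "Cs \<noteq> {}"
  proof (cases "m' = m+1")
    case True
    obtain i where i: "i \<in> {1,2,3::nat}" "m' = rank (K' i)" using m'in by (rule imageE) blast
    then have "rank (K' i) = m+1" using True by simp
    then show ?thesis using rk True i(1) unfolding Cs_def by blast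
  next
    case False
    then have "m' = m" using mm by simp
    then show ?thesis using L3 decL' unfolding Cs_def by blast
  qed
  define L' where "L' = lL s'"
  define N' where "N' = lN s'"
  define D' where "D' = lD s'"
  have lab': "{L',N',D'} = {1,2,3}" "Cs \<noteq> {} \<longrightarrow> L' = Min Cs"
      "\<not> (unsolved (K' N') \<noteq> {} \<and> unsolved (K' D') = {})"
    using lab unfolding labels_ok_def Let_def Cs_def L'_def N'_def D'_def K'_def m'_def by auto
  have L'3: "L' \<in> {1,2,3}" "N' \<in> {1,2,3}" "D' \<in> {1,2,3}" and dst': "L' \<noteq> N'" "L' \<noteq> D'" "N' \<noteq> D'"
    using labels3[OF lab'(1)] by auto
  have "finite Cs" unfolding Cs_def by simp
  then have "Min Cs \<in> Cs" using Cne by (rule Min_in)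
  then have "L' \<in> Cs" using lab'(2) Cne by simp
  then have decL'': "{1..m'} \<subseteq> decoded (K' L')" by (simp add: Cs_def)
  have hd': "\<forall>i\<in>{1,2,3}. subspace (K' i) \<and> heard (K' i) \<subseteq> {1..m' + 1}"
    using C1 mm by fastforce
  have pN': "pureK (K' N')"
  proof (rule ccontr)
    assume np: "\<not> pureK (K' N')"
    then have nd: "\<not> pureK (K' D')" using lab'(3) by (simp add: pureK_unsolved)
    have "N' \<noteq> L" using np C2 by auto
    moreover have "D' \<noteq> L" using nd C2 by auto
    ultimately have "(N' = N \<and> D' = D) \<or> (N' = D \<and> D' = N)"
      using L'3 dst' labels3[OF labs] by metis
    then show False using np nd C3 by auto
  qed
  have pS': "pureK (lspan (K' N' \<union> K' D'))"
  proof (cases "N' = L \<or> D' = L")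
    case True
    have "heard (lspan (K' N' \<union> K' D')) \<subseteq> {1..m+1}"
      using C1 L'3 by (simp add: heard_lspan heard_Un) blast
    moreover have "{1..m} \<subseteq> decoded (lspan (K' N' \<union> K' D'))"
      using True decL' decoded_mono[of "K' L" "lspan (K' N' \<union> K' D')"] lspan_sup[of "K' N' \<union> K' D'"]
      by blast
    ultimately show ?thesis using sandwich[OF lspan_subspace] by (simp add: pureK_def)
  next
    case False
    then have "(N' = N \<and> D' = D) \<or> (N' = D \<and> D' = N)"
      using L'3 dst' labels3[OF labs] by metis
    then show ?thesis using C4 by (auto simp: Un_commute)
  qed
  show ?thesis unfolding Inv_def
    using lab'(1) hd' decL'' pN' pS'
    unfolding K'_def L'_def N'_def D'_def m'_def by simp
qed

lemma Inv_init: "Inv init_state"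
proof -
  have h: "heard (lspan {}) = {}" by (simp only: heard_lspan) (simp add: heard_def)
  have h2: "heard (lspan (lspan {} \<union> lspan {})) = {}" by (simp only: Un_absorb heard_lspan) (simp add: heard_def)
  show ?thesis unfolding Inv_def init_state_def pureK_def
    using h h2 lspan_subspace by auto
qed

theorem theorem12:
  fixes arrived :: "nat \<Rightarrow> nat" and rcv :: "nat \<Rightarrow> nat \<Rightarrow> bool"
    and st :: "nat \<Rightarrow> state" and t :: nat
  assumes "mono arrived"
    and "st 0 = init_state"
    and "\<forall>k. step (arrived k) (rcv k) (st k) (st (Suc k))"
    and "t > 0"
  shows "unsolved (know (st t) (lN (st t))) = {} \<or> unsolved (know (st t) (lD (st t))) = {}"
proof -
  have "Inv (st k)" for k
  proof (induction k)
    case 0 then show ?case using assms(2) Inv_init by simp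
  next
    case (Suc k) then show ?case using assms(3) step_inv by blast
  qed
  then have "pureK (know (st t) (lN (st t)))" unfolding Inv_def by blast
  then show ?thesis by (simp add: pureK_unsolved)
qed

end
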